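(* Let $q\equiv 3\pmod 4$ be a prime power and let $A$ be a multiplicative subgroup of $\mathbb{F}_q^*$ with $|A|\ge q^{2/3}$. There is an absolute constant $C>0$ such that for all functions $f_1,f_2,f_3,f_4\colon\mathbb{F}_q^2\to[-1,1]$, \[|N(f_1,f_2,f_3,f_4)|\le\min_{1\le j\le 4}\|f_j\|_{\square(V_1\times V_2)}+C\,\frac{q^{1/8}}{|A|^{1/4}}.\]
   Context: Define $\sigma\colon\mathbb{F}_q\to\mathbb{R}$ by $\sigma(x)=q/|A|$ if $x\in A$ and $\sigma(x)=0$ otherwise. Writing points of $\mathbb{F}_q^2=V_1\times V_2$ ($V_1=V_2=\mathbb{F}_q$) as $(a,c)$, define \[N(f_1,f_2,f_3,f_4)=\frac{1}{q^4}\sum_{a,b,c,d\in\mathbb{F}_q}f_1(a,c)f_2(a,d)f_3(b,c)f_4(b,d)\sigma(a-b)\sigma(c-d),\] \[M(f_1,f_2,f_3,f_4)=\frac{1}{q^4}\sum_{a,b,c,d\in\mathbb{F}_q}f_1(a,c)f_2(a,d)f_3(b,c)f_4(b,d),\] and $\|f\|_{\square(V_1\times V_2)}=M(f,f,f,f)^{1/4}$ for $f\colon\mathbb{F}_q^2\to[-1,1]$. *)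

theory Defs
  imports "HOL-Algebra.Multiplicative_Group"
begin

text \<open>Finite field F_q given as a HOL-Algebra field R whose elements are
  natural numbers (every finite field is isomorphic to one of this form), so that
  the absolute constant C can be quantified before the field.\<close>

definition sigma :: "nat ring \<Rightarrow> nat set \<Rightarrow> nat \<Rightarrow> real" where
  "sigma R A x = (if x \<in> A then real (card (carrier R)) / real (card A) else 0)"

definition Nform :: "nat ring \<Rightarrow> nat set \<Rightarrow> (nat \<times> nat \<Rightarrow> real) \<Rightarrow> (nat \<times> nat \<Rightarrow> real)
    \<Rightarrow> (nat \<times> nat \<Rightarrow> real) \<Rightarrow> (nat \<times> nat \<Rightarrow> real) \<Rightarrow> real" where
  "Nform R A f1 f2 f3 f4 = (1 / real (card (carrier R)) ^ 4) *
     (\<Sum>a\<in>carrier R. \<Sum>b\<in>carrier R. \<Sum>c\<in>carrier R. \<Sum>d\<in>carrier R.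
        f1 (a,c) * f2 (a,d) * f3 (b,c) * f4 (b,d) *
        sigma R A (a \<ominus>\<^bsub>R\<^esub> b) * sigma R A (c \<ominus>\<^bsub>R\<^esub> d))"

definition Mform :: "nat ring \<Rightarrow> (nat \<times> nat \<Rightarrow> real) \<Rightarrow> (nat \<times> nat \<Rightarrow> real)
    \<Rightarrow> (nat \<times> nat \<Rightarrow> real) \<Rightarrow> (nat \<times> nat \<Rightarrow> real) \<Rightarrow> real" where
  "Mform R f1 f2 f3 f4 = (1 / real (card (carrier R)) ^ 4) *
     (\<Sum>a\<in>carrier R. \<Sum>b\<in>carrier R. \<Sum>c\<in>carrier R. \<Sum>d\<in>carrier R.
        f1 (a,c) * f2 (a,d) * f3 (b,c) * f4 (b,d))"

definition box_norm :: "nat ring \<Rightarrow> (nat \<times> nat \<Rightarrow> real) \<Rightarrow> real" where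
  "box_norm R f = Mform R f f f f powr (1/4)"

end

theory Submission
  imports Defs
begin


lemma cs_sum:
  fixes a b :: "'a \<Rightarrow> real"
  shows "(\<Sum>i\<in>I. a i * b i)\<^sup>2 \<le> (\<Sum>i\<in>I. (a i)\<^sup>2) * (\<Sum>i\<in>I. (b i)\<^sup>2)"
proof (cases "(\<Sum>i\<in>I. (b i)\<^sup>2) > 0")
  case False
  then consider "\<And>i. i\<in>I \<Longrightarrow> b i = 0" | "infinite I"
    by (metis (mono_tags, lifting) sum_pos2 zero_le_power2 zero_less_power2)
  thus ?thesis by fastforce
next
  case True
  define r where "r = (\<Sum>i\<in>I. a i * b i) / (\<Sum>i\<in>I. (b i)\<^sup>2)"
  have "0 \<le> (\<Sum>i\<in>I. (a i - r * b i)\<^sup>2)" by (simp add: sum_nonneg)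
  also have "\<dots> = (\<Sum>i\<in>I. (a i)\<^sup>2) - 2 * r * (\<Sum>i\<in>I. a i * b i) + r\<^sup>2 * (\<Sum>i\<in>I. (b i)\<^sup>2)"
    by (simp add: power2_eq_square algebra_simps sum.distrib sum_subtractf sum_distrib_left)
  also have "\<dots> = (\<Sum>i\<in>I. (a i)\<^sup>2) - (\<Sum>i\<in>I. a i * b i)\<^sup>2 / (\<Sum>i\<in>I. (b i)\<^sup>2)"
    using True by (simp add: r_def power2_eq_square field_simps)
  finally show ?thesis using True by (simp add: field_simps)
qed

lemma sum_endo:
  assumes "finite S" "inj_on f S" "f ` S \<subseteq> S"
  shows "(\<Sum>x\<in>S. g (f x)) = (\<Sum>x\<in>S. g x)"
proof -
  have "f ` S = S" using endo_inj_surj assms by blast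
  then show ?thesis using sum.reindex[OF assms(2), of g] by simp
qed


lemma swap4:
  "(\<Sum>t\<in>T. \<Sum>y\<in>Y. \<Sum>a\<in>U. \<Sum>b\<in>V. G t y a b) = (\<Sum>a\<in>U. \<Sum>b\<in>V. \<Sum>t\<in>T. \<Sum>y\<in>Y. G t y a b)"
proof -
  have "(\<Sum>t\<in>T. \<Sum>y\<in>Y. \<Sum>a\<in>U. \<Sum>b\<in>V. G t y a b) = (\<Sum>t\<in>T. \<Sum>a\<in>U. \<Sum>b\<in>V. \<Sum>y\<in>Y. G t y a b)"
    by (rule sum.cong[OF refl], subst sum.swap, rule sum.cong[OF refl], rule sum.swap)
  also have "\<dots> = (\<Sum>a\<in>U. \<Sum>b\<in>V. \<Sum>t\<in>T. \<Sum>y\<in>Y. G t y a b)"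
    by (subst sum.swap, rule sum.cong[OF refl], rule sum.swap)
  finally show ?thesis .
qed

context field
begin

lemma alg_test: "y \<in> carrier R \<Longrightarrow> t \<in> carrier R \<Longrightarrow> a \<in> carrier R \<Longrightarrow> a' \<in> carrier R \<Longrightarrow>
  (y \<oplus> t \<otimes> a) \<ominus> t \<otimes> a' = y \<oplus> (a \<ominus> a') \<otimes> t"
  by algebra

lemma sum_sub_left:
  assumes "finite (carrier R)" "x \<in> carrier R"
  shows "(\<Sum>y\<in>carrier R. g (x \<ominus> y)) = (\<Sum>y\<in>carrier R. g y)"
proof (rule sum_endo[OF assms(1)])
  show "inj_on (\<lambda>y. x \<ominus> y) (carrier R)"
  proof (rule inj_onI)
    fix y z assume yz: "y \<in> carrier R" "z \<in> carrier R" "x \<ominus> y = x \<ominus> z"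
    have "y = x \<ominus> (x \<ominus> y)" using yz(1) assms(2) by algebra
    also have "\<dots> = x \<ominus> (x \<ominus> z)" by (simp only: yz(3))
    also have "\<dots> = z" using yz(2) assms(2) by algebra
    finally show "y = z" .
  qed
  show "(\<lambda>y. x \<ominus> y) ` carrier R \<subseteq> carrier R" using assms(2) by auto
qed

lemma sum_add_right:
  assumes "finite (carrier R)" "b \<in> carrier R"
  shows "(\<Sum>y\<in>carrier R. g (y \<oplus> b)) = (\<Sum>y\<in>carrier R. g y)"
proof (rule sum_endo[OF assms(1)])
  show "inj_on (\<lambda>y. y \<oplus> b) (carrier R)"
    by (rule inj_onI) (use assms(2) in simp)
  show "(\<lambda>y. y \<oplus> b) ` carrier R \<subseteq> carrier R" using assms(2) by auto
qed

lemma sum_affine: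
  assumes "finite (carrier R)" "b \<in> carrier R" "c \<in> carrier R" "c \<noteq> \<zero>"
  shows "(\<Sum>t\<in>carrier R. g (b \<oplus> c \<otimes> t)) = (\<Sum>t\<in>carrier R. g t)"
proof (rule sum_endo[OF assms(1)])
  show "inj_on (\<lambda>t. b \<oplus> c \<otimes> t) (carrier R)"
  proof (rule inj_onI)
    fix x y assume xy: "x \<in> carrier R" "y \<in> carrier R" "b \<oplus> c \<otimes> x = b \<oplus> c \<otimes> y"
    then have "c \<otimes> x = c \<otimes> y" using assms by simp
    then show "x = y" using assms xy m_lcancel by blast
  qed
  show "(\<lambda>t. b \<oplus> c \<otimes> t) ` carrier R \<subseteq> carrier R" using assms by auto
qed

lemma subgroup_facts:
  assumes sg: "subgroup A (mult_of R)" and fin: "finite (carrier R)"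
  shows "A \<subseteq> carrier R" "\<zero> \<notin> A" "finite A" "\<one> \<in> A" "card A > 0"
    "\<And>t a. t \<in> A \<Longrightarrow> a \<in> A \<Longrightarrow> t \<otimes> a \<in> A"
proof -
  have s: "A \<subseteq> carrier R - {\<zero>}" using subgroup.subset[OF sg] by simp
  then show "A \<subseteq> carrier R" "\<zero> \<notin> A" by auto
  then show fA: "finite A" using fin finite_subset by blast
  show o: "\<one> \<in> A" using subgroup.one_closed[OF sg] by simp
  show "card A > 0" using fA o card_gt_0_iff by blast
  show "\<And>t a. t \<in> A \<Longrightarrow> a \<in> A \<Longrightarrow> t \<otimes> a \<in> A" using subgroup.m_closed[OF sg] by simp
qed

lemma key:
  assumes fin: "finite (carrier R)" and sg: "subgroup A (mult_of R)"
    and w0: "(\<Sum>x\<in>carrier R. w x) = 0"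
  shows "(\<Sum>x\<in>carrier R. (\<Sum>a\<in>A. w (x \<ominus> a))\<^sup>2) \<le> real (card (carrier R)) * (\<Sum>x\<in>carrier R. (w x)\<^sup>2)"
proof -
  note sf = subgroup_facts[OF sg fin]
  define F where "F = carrier R"
  define W where "W = (\<Sum>x\<in>F. (w x)\<^sup>2)"
  define Q where "Q t = (\<Sum>y\<in>F. (\<Sum>a\<in>A. w (y \<ominus> t \<otimes> a))\<^sup>2)" for t
  have QA: "Q t = (\<Sum>x\<in>carrier R. (\<Sum>a\<in>A. w (x \<ominus> a))\<^sup>2)" if t: "t \<in> A" for t
  proof -
    have tc: "t \<in> carrier R" "t \<noteq> \<zero>" using t sf by auto
    have "(\<Sum>a\<in>A. w (y \<ominus> t \<otimes> a)) = (\<Sum>a\<in>A. w (y \<ominus> a))" for y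
    proof (rule sum_endo[OF sf(3), of "\<lambda>a. t \<otimes> a" "\<lambda>a. w (y \<ominus> a)"])
      show "inj_on ((\<otimes>) t) A"
        by (rule inj_onI) (use tc sf(1) m_lcancel in blast)
      show "(\<otimes>) t ` A \<subseteq> A" using sf(6) t by auto
    qed
    then show ?thesis unfolding Q_def F_def by simp
  qed
  have pair: "(\<Sum>t\<in>F. \<Sum>y\<in>F. w (y \<ominus> t \<otimes> a) * w (y \<ominus> t \<otimes> a')) = (if a = a' then real (card F) * W else 0)"
    if aa: "a \<in> A" "a' \<in> A" for a a'
  proof -
    have ac: "a \<in> carrier R" "a' \<in> carrier R" using aa sf by auto
    show ?thesis
    proof (cases "a = a'")
      case True
      have "(\<Sum>y\<in>F. w (y \<ominus> t \<otimes> a) * w (y \<ominus> t \<otimes> a)) = W" if t: "t \<in> F" for t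
      proof -
        have "(\<Sum>y\<in>F. w (y \<ominus> t \<otimes> a) * w (y \<ominus> t \<otimes> a)) = (\<Sum>y\<in>F. (\<lambda>z. w z * w z) (y \<oplus> \<ominus> (t \<otimes> a)))"
          by (simp add: minus_eq)
        also have "\<dots> = (\<Sum>y\<in>F. w y * w y)"
          unfolding F_def by (rule sum_add_right[OF fin]) (use t ac F_def in simp)
        finally show ?thesis by (simp add: W_def power2_eq_square)
      qed
      then show ?thesis using True by simp
    next
      case False
      have cne: "a \<ominus> a' \<in> carrier R" "a \<ominus> a' \<noteq> \<zero>" using ac False
        using r_right_minus_eq by auto
      have step1: "(\<Sum>y\<in>F. w (y \<ominus> t \<otimes> a) * w (y \<ominus> t \<otimes> a')) = (\<Sum>y\<in>F. w y * w (y \<oplus> (a \<ominus> a') \<otimes> t))"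
        if t: "t \<in> F" for t
      proof -
        have "(\<Sum>y\<in>F. w (y \<ominus> t \<otimes> a) * w (y \<ominus> t \<otimes> a')) = (\<Sum>y\<in>F. (\<lambda>z. w (z \<ominus> t \<otimes> a) * w (z \<ominus> t \<otimes> a')) (y \<oplus> t \<otimes> a))"
          unfolding F_def by (rule sum_add_right[OF fin, symmetric]) (use t ac F_def in simp)
        also have "\<dots> = (\<Sum>y\<in>F. w y * w (y \<oplus> (a \<ominus> a') \<otimes> t))"
        proof (rule sum.cong[OF refl])
          fix y assume y: "y \<in> F"
          have e1: "(y \<oplus> t \<otimes> a) \<ominus> t \<otimes> a = y" using y t ac unfolding F_def by algebra
          have e2: "(y \<oplus> t \<otimes> a) \<ominus> t \<otimes> a' = y \<oplus> (a \<ominus> a') \<otimes> t" using y t ac unfolding F_def by algebra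
          show "(\<lambda>z. w (z \<ominus> t \<otimes> a) * w (z \<ominus> t \<otimes> a')) (y \<oplus> t \<otimes> a) = w y * w (y \<oplus> (a \<ominus> a') \<otimes> t)"
            using e1 e2 by simp
        qed
        finally show ?thesis .
      qed
      have "(\<Sum>t\<in>F. \<Sum>y\<in>F. w (y \<ominus> t \<otimes> a) * w (y \<ominus> t \<otimes> a')) = (\<Sum>t\<in>F. \<Sum>y\<in>F. w y * w (y \<oplus> (a \<ominus> a') \<otimes> t))"
        using step1 by simp
      also have "\<dots> = (\<Sum>y\<in>F. w y * (\<Sum>t\<in>F. w (y \<oplus> (a \<ominus> a') \<otimes> t)))"
        by (subst sum.swap) (simp add: sum_distrib_left)
      also have "\<dots> = 0"
      proof -
        have "(\<Sum>t\<in>F. w (y \<oplus> (a \<ominus> a') \<otimes> t)) = 0" if y: "y \<in> F" for y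
          using sum_affine[OF fin _ cne, of y w] y w0 unfolding F_def by simp
        then show ?thesis by simp
      qed
      finally show ?thesis using False by simp
    qed
  qed
  have Qexp: "Q t = (\<Sum>y\<in>F. \<Sum>a\<in>A. \<Sum>a'\<in>A. w (y \<ominus> t \<otimes> a) * w (y \<ominus> t \<otimes> a'))" for t
    unfolding Q_def by (simp add: power2_eq_square sum_product)
  have "(\<Sum>t\<in>F. Q t) = (\<Sum>t\<in>F. \<Sum>y\<in>F. \<Sum>a\<in>A. \<Sum>a'\<in>A. w (y \<ominus> t \<otimes> a) * w (y \<ominus> t \<otimes> a'))"
    using Qexp by simp
  also have "\<dots> = (\<Sum>a\<in>A. \<Sum>a'\<in>A. \<Sum>t\<in>F. \<Sum>y\<in>F. w (y \<ominus> t \<otimes> a) * w (y \<ominus> t \<otimes> a'))"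
    by (rule swap4)
  also have "\<dots> = (\<Sum>a\<in>A. \<Sum>a'\<in>A. (if a = a' then real (card F) * W else 0))"
    using pair by simp
  also have "\<dots> = real (card A) * (real (card F) * W)"
    using sf(3) by simp
  finally have sumQ: "(\<Sum>t\<in>F. Q t) = real (card A) * (real (card F) * W)" .
  have "real (card A) * (\<Sum>x\<in>carrier R. (\<Sum>a\<in>A. w (x \<ominus> a))\<^sup>2) = (\<Sum>t\<in>A. Q t)"
    using QA by simp
  also have "\<dots> \<le> (\<Sum>t\<in>F. Q t)"
    by (rule sum_mono2) (use fin sf F_def Q_def in \<open>auto intro: sum_nonneg\<close>)
  finally have "real (card A) * (\<Sum>x\<in>carrier R. (\<Sum>a\<in>A. w (x \<ominus> a))\<^sup>2) \<le> real (card A) * (real (card F) * W)"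
    using sumQ by simp
  then show ?thesis using sf(5) unfolding F_def W_def by simp
qed

end

lemma sigma_conv:
  fixes R :: "nat ring"
  assumes fR: "field R" and fin: "finite (carrier R)" and sg: "subgroup A (mult_of R)" and x: "x \<in> carrier R"
  shows "(\<Sum>y\<in>carrier R. sigma R A (x \<ominus>\<^bsub>R\<^esub> y) * v y)
     = real (card (carrier R)) / real (card A) * (\<Sum>a\<in>A. v (x \<ominus>\<^bsub>R\<^esub> a))"
proof -
  interpret field R by (rule fR)
  note sf = subgroup_facts[OF sg fin]
  have "(\<Sum>y\<in>carrier R. sigma R A (x \<ominus>\<^bsub>R\<^esub> y) * v y)
      = (\<Sum>y\<in>carrier R. (\<lambda>z. sigma R A z * v (x \<ominus>\<^bsub>R\<^esub> z)) (x \<ominus>\<^bsub>R\<^esub> y))"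
  proof (rule sum.cong[OF refl])
    fix y assume y: "y \<in> carrier R"
    have "x \<ominus>\<^bsub>R\<^esub> (x \<ominus>\<^bsub>R\<^esub> y) = y" using x y by algebra
    then show "sigma R A (x \<ominus>\<^bsub>R\<^esub> y) * v y = (\<lambda>z. sigma R A z * v (x \<ominus>\<^bsub>R\<^esub> z)) (x \<ominus>\<^bsub>R\<^esub> y)" by simp
  qed
  also have "\<dots> = (\<Sum>z\<in>carrier R. sigma R A z * v (x \<ominus>\<^bsub>R\<^esub> z))"
    by (rule sum_sub_left[OF fin x])
  also have "\<dots> = (\<Sum>z\<in>carrier R. if z \<in> A then real (card (carrier R)) / real (card A) * v (x \<ominus>\<^bsub>R\<^esub> z) else 0)"
    by (rule sum.cong[OF refl]) (simp add: sigma_def)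
  also have "\<dots> = (\<Sum>z\<in>carrier R \<inter> A. real (card (carrier R)) / real (card A) * v (x \<ominus>\<^bsub>R\<^esub> z))"
    by (rule sum.inter_restrict[symmetric, OF fin])
  also have "carrier R \<inter> A = A" using sf(1) by blast
  finally show ?thesis by (simp add: sum_distrib_left)
qed

lemma sigma_sum:
  fixes R :: "nat ring"
  assumes fR: "field R" and fin: "finite (carrier R)" and sg: "subgroup A (mult_of R)" and x: "x \<in> carrier R"
  shows "(\<Sum>y\<in>carrier R. sigma R A (x \<ominus>\<^bsub>R\<^esub> y)) = real (card (carrier R))"
proof -
  interpret field R by (rule fR)
  show ?thesis using sigma_conv[OF fR fin sg x, of "\<lambda>_. 1"] subgroup_facts(5)[OF sg fin] by simp
qed

lemma sigma_nonneg: "sigma R A x \<ge> 0"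
  by (simp add: sigma_def)

lemma bilin:
  fixes R :: "nat ring"
  assumes fR: "field R" and fin: "finite (carrier R)" and sg: "subgroup A (mult_of R)"
    and u: "\<And>x. x \<in> carrier R \<Longrightarrow> \<bar>u x\<bar> \<le> 1"
    and v: "\<And>x. x \<in> carrier R \<Longrightarrow> \<bar>v x\<bar> \<le> 1"
  shows "\<bar>\<Sum>x\<in>carrier R. \<Sum>y\<in>carrier R. (sigma R A (x \<ominus>\<^bsub>R\<^esub> y) - 1) * (u x * v y)\<bar>
     \<le> real (card (carrier R))^2 * (sqrt (real (card (carrier R))) / real (card A))"
proof -
  interpret field R by (rule fR)
  note sf = subgroup_facts[OF sg fin]
  define F where "F = carrier R"
  define q where "q = real (card F)"
  define n where "n = real (card A)"
  have qpos: "q > 0" using fin sf unfolding q_def F_def by (metis card_0_eq empty_iff of_nat_0_less_iff gr0I subsetD)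
  have npos: "n > 0" using sf n_def by simp
  define V where "V = (\<Sum>y\<in>F. v y)"
  define w where "w y = v y - V / q" for y
  define h where "h x = (\<Sum>y\<in>F. (sigma R A (x \<ominus>\<^bsub>R\<^esub> y) - 1) * v y)" for x
  have w0: "(\<Sum>y\<in>F. w y) = 0"
    using qpos by (simp add: w_def sum_subtractf V_def q_def)
  have hx: "h x = q / n * (\<Sum>a\<in>A. w (x \<ominus>\<^bsub>R\<^esub> a))" if x: "x \<in> F" for x
  proof -
    have "h x = (\<Sum>y\<in>F. sigma R A (x \<ominus>\<^bsub>R\<^esub> y) * v y) - V"
      by (simp add: h_def V_def left_diff_distrib sum_subtractf)
    also have "\<dots> = q / n * (\<Sum>a\<in>A. v (x \<ominus>\<^bsub>R\<^esub> a)) - V"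
      using sigma_conv[OF fR fin sg, of x v] x unfolding F_def q_def n_def by simp
    also have "\<dots> = q / n * (\<Sum>a\<in>A. w (x \<ominus>\<^bsub>R\<^esub> a))"
    proof -
      have "(\<Sum>a\<in>A. w (x \<ominus>\<^bsub>R\<^esub> a)) = (\<Sum>a\<in>A. v (x \<ominus>\<^bsub>R\<^esub> a)) - n * (V / q)"
        by (simp add: w_def sum_subtractf n_def)
      then show ?thesis using qpos npos by (simp add: field_simps)
    qed
    finally show ?thesis .
  qed
  have Sw: "(\<Sum>y\<in>F. (w y)\<^sup>2) \<le> (\<Sum>y\<in>F. (v y)\<^sup>2)"
  proof -
    have "(\<Sum>y\<in>F. (w y)\<^sup>2) = (\<Sum>y\<in>F. (v y)\<^sup>2) - 2 * (V / q) * V + q * (V/q)\<^sup>2"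
    proof -
      have "(\<Sum>y\<in>F. 2 * v y * (V / q)) = 2 * (V / q) * V"
      proof -
        have "(\<Sum>y\<in>F. v y) * (2 * (V / q)) = (\<Sum>y\<in>F. v y * (2 * (V / q)))"
          by (rule sum_distrib_right)
        also have "\<dots> = (\<Sum>y\<in>F. 2 * v y * (V / q))"
          by (rule sum.cong) auto
        finally have "(\<Sum>y\<in>F. 2 * v y * (V / q)) = (\<Sum>y\<in>F. v y) * (2 * (V / q))" by simp
        then show ?thesis by (simp add: V_def mult_ac)
      qed
      then show ?thesis
        by (simp add: w_def power2_diff sum.distrib sum_subtractf q_def)
    qed
    also have "\<dots> = (\<Sum>y\<in>F. (v y)\<^sup>2) - V\<^sup>2 / q"
      using qpos by (simp add: power2_eq_square field_simps)
    also have "\<dots> \<le> (\<Sum>y\<in>F. (v y)\<^sup>2)" using qpos by simp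
    finally show ?thesis .
  qed
  have Sv: "(\<Sum>y\<in>F. (v y)\<^sup>2) \<le> q"
  proof -
    have "(\<Sum>y\<in>F. (v y)\<^sup>2) \<le> (\<Sum>y\<in>F. 1)"
      by (rule sum_mono) (use v F_def abs_square_le_1 in blast)
    then show ?thesis by (simp add: q_def)
  qed
  have Su: "(\<Sum>y\<in>F. (u y)\<^sup>2) \<le> q"
  proof -
    have "(\<Sum>y\<in>F. (u y)\<^sup>2) \<le> (\<Sum>y\<in>F. 1)"
      by (rule sum_mono) (use u F_def abs_square_le_1 in blast)
    then show ?thesis by (simp add: q_def)
  qed
  have Sh: "(\<Sum>x\<in>F. (h x)\<^sup>2) \<le> (q / n)\<^sup>2 * (q * q)"
  proof -
    have "(\<Sum>x\<in>F. (h x)\<^sup>2) = (q / n)\<^sup>2 * (\<Sum>x\<in>F. (\<Sum>a\<in>A. w (x \<ominus>\<^bsub>R\<^esub> a))\<^sup>2)"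
    proof -
      have "(\<Sum>x\<in>F. (h x)\<^sup>2) = (\<Sum>x\<in>F. (q / n)\<^sup>2 * (\<Sum>a\<in>A. w (x \<ominus>\<^bsub>R\<^esub> a))\<^sup>2)"
        by (rule sum.cong[OF refl]) (simp only: hx power_mult_distrib)
      then show ?thesis by (simp only: sum_distrib_left)
    qed
    also have "\<dots> \<le> (q / n)\<^sup>2 * (q * (\<Sum>y\<in>F. (w y)\<^sup>2))"
      using key[OF fin sg, of w] w0 unfolding F_def q_def by (simp add: mult_left_mono)
    also have "\<dots> \<le> (q / n)\<^sup>2 * (q * q)"
      using Sw Sv qpos by (intro mult_left_mono) auto
    finally show ?thesis .
  qed
  have eq: "(\<Sum>x\<in>F. \<Sum>y\<in>F. (sigma R A (x \<ominus>\<^bsub>R\<^esub> y) - 1) * (u x * v y)) = (\<Sum>x\<in>F. u x * h x)"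
    by (simp add: h_def sum_distrib_left mult_ac)
  have "(\<Sum>x\<in>F. u x * h x)\<^sup>2 \<le> (\<Sum>x\<in>F. (u x)\<^sup>2) * (\<Sum>x\<in>F. (h x)\<^sup>2)"
    by (rule cs_sum)
  also have "\<dots> \<le> q * ((q / n)\<^sup>2 * (q * q))"
    using Su Sh qpos by (intro mult_mono) (auto intro: sum_nonneg)
  also have "\<dots> = (q^2 * (sqrt q / n))\<^sup>2"
  proof -
    have e: "(q^2 * (sqrt q / n))\<^sup>2 = q^4 * q / n^2"
      using qpos by (simp add: power_mult_distrib power_divide power_mult[symmetric] abs_of_pos[OF qpos])
    show ?thesis unfolding e using npos by (simp add: power2_eq_square power4_eq_xxxx field_simps)
  qed
  finally have sq: "\<bar>\<Sum>x\<in>F. u x * h x\<bar>\<^sup>2 \<le> (q^2 * (sqrt q / n))\<^sup>2"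
    by (simp only: power2_abs)
  have "0 \<le> q^2 * (sqrt q / n)" using qpos npos by simp
  with sq have "\<bar>\<Sum>x\<in>F. u x * h x\<bar> \<le> q^2 * (sqrt q / n)"
    by (rule power2_le_imp_le)
  then show ?thesis using eq unfolding F_def q_def n_def by simp
qed




definition S4 :: "nat set \<Rightarrow> (nat \<times> nat \<Rightarrow> real) \<Rightarrow> (nat \<times> nat \<Rightarrow> real)
    \<Rightarrow> (nat \<times> nat \<Rightarrow> real) \<Rightarrow> (nat \<times> nat \<Rightarrow> real) \<Rightarrow> real" where
  "S4 F g1 g2 g3 g4 = (\<Sum>a\<in>F. \<Sum>b\<in>F. \<Sum>c\<in>F. \<Sum>d\<in>F. g1 (a,c) * g2 (a,d) * g3 (b,c) * g4 (b,d))"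

lemma S4_i: "S4 F g1 g2 g3 g4 = (\<Sum>a\<in>F. \<Sum>b\<in>F. (\<Sum>c\<in>F. g1 (a,c) * g3 (b,c)) * (\<Sum>d\<in>F. g2 (a,d) * g4 (b,d)))"
  unfolding S4_def by (simp add: sum_product mult_ac)

lemma S4_ii: "S4 F g1 g2 g3 g4 = (\<Sum>c\<in>F. \<Sum>d\<in>F. (\<Sum>a\<in>F. g1 (a,c) * g2 (a,d)) * (\<Sum>b\<in>F. g3 (b,c) * g4 (b,d)))"
proof -
  have "(\<Sum>c\<in>F. \<Sum>d\<in>F. (\<Sum>a\<in>F. g1 (a,c) * g2 (a,d)) * (\<Sum>b\<in>F. g3 (b,c) * g4 (b,d)))
     = (\<Sum>c\<in>F. \<Sum>d\<in>F. \<Sum>a\<in>F. \<Sum>b\<in>F. g1 (a,c) * g2 (a,d) * g3 (b,c) * g4 (b,d))"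
    by (simp add: sum_product mult_ac)
  also have "\<dots> = S4 F g1 g2 g3 g4" unfolding S4_def by (rule swap4)
  finally show ?thesis by simp
qed

lemma cs2:
  fixes P Q :: "nat \<Rightarrow> nat \<Rightarrow> real"
  shows "(\<Sum>a\<in>F. \<Sum>b\<in>F. P a b * Q a b)\<^sup>2 \<le> (\<Sum>a\<in>F. \<Sum>b\<in>F. (P a b)\<^sup>2) * (\<Sum>a\<in>F. \<Sum>b\<in>F. (Q a b)\<^sup>2)"
proof -
  have e: "(\<Sum>a\<in>F. \<Sum>b\<in>F. G a b) = (\<Sum>z\<in>F \<times> F. G (fst z) (snd z))" for G :: "nat \<Rightarrow> nat \<Rightarrow> real"
    by (simp add: sum.cartesian_product case_prod_beta)
  show ?thesis unfolding e by (rule cs_sum)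
qed

lemma S4_sq1: "(S4 F f1 f2 f3 f4)\<^sup>2 \<le> S4 F f1 f1 f3 f3 * S4 F f2 f2 f4 f4"
  unfolding S4_i using cs2[where F=F and P="\<lambda>a b. \<Sum>c\<in>F. f1 (a,c) * f3 (b,c)" and Q="\<lambda>a b. \<Sum>d\<in>F. f2 (a,d) * f4 (b,d)"]
  by (simp only: power2_eq_square)

lemma S4_sq2: "(S4 F g g h h)\<^sup>2 \<le> S4 F g g g g * S4 F h h h h"
  unfolding S4_ii using cs2[where F=F and P="\<lambda>c d. \<Sum>a\<in>F. g (a,c) * g (a,d)" and Q="\<lambda>c d. \<Sum>b\<in>F. h (b,c) * h (b,d)"]
  by (simp only: power2_eq_square)

lemma S4_nonneg: "S4 F g g h h \<ge> 0"
  unfolding S4_i by (auto intro!: sum_nonneg)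

lemma S4_abs:
  assumes "finite F" "\<And>g x y. g \<in> {g1,g2,g3,g4} \<Longrightarrow> x \<in> F \<Longrightarrow> y \<in> F \<Longrightarrow> \<bar>g (x,y)\<bar> \<le> 1"
  shows "\<bar>S4 F g1 g2 g3 g4\<bar> \<le> real (card F)^4"
proof -
  have b: "\<bar>g1 (a,c) * g2 (a,d) * g3 (b,c) * g4 (b,d)\<bar> \<le> 1" if "a \<in> F" "b \<in> F" "c \<in> F" "d \<in> F" for a b c d
  proof -
    have "\<bar>g1 (a,c)\<bar> \<le> 1" "\<bar>g2 (a,d)\<bar> \<le> 1" "\<bar>g3 (b,c)\<bar> \<le> 1" "\<bar>g4 (b,d)\<bar> \<le> 1"
      using assms(2) that by auto
    then show ?thesis by (simp add: abs_mult mult_le_one)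
  qed
  have "\<bar>S4 F g1 g2 g3 g4\<bar> \<le> (\<Sum>a\<in>F. \<Sum>b\<in>F. \<Sum>c\<in>F. \<Sum>d\<in>F. 1)"
    unfolding S4_def
    apply (rule order_trans[OF sum_abs], rule sum_mono)
    apply (rule order_trans[OF sum_abs], rule sum_mono)
    apply (rule order_trans[OF sum_abs], rule sum_mono)
    apply (rule order_trans[OF sum_abs], rule sum_mono)
    using b by auto
  then show ?thesis by (simp add: power4_eq_xxxx)
qed

lemma S4_symd: "S4 F g1 g2 g3 g4 = S4 F g2 g1 g4 g3"
  unfolding S4_def
  by (rule sum.cong[OF refl], rule sum.cong[OF refl], subst sum.swap) (simp add: mult_ac)

lemma S4_symb: "S4 F g1 g2 g3 g4 = S4 F g3 g4 g1 g2"
  unfolding S4_def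
  by (subst sum.swap) (simp add: mult_ac)

lemma S4_main:
  assumes "finite F" "\<And>g x y. g \<in> {f1,f2,f3,f4} \<Longrightarrow> x \<in> F \<Longrightarrow> y \<in> F \<Longrightarrow> \<bar>g (x,y)\<bar> \<le> 1"
  shows "(S4 F f1 f2 f3 f4)^4 \<le> S4 F f1 f1 f1 f1 * real (card F)^12"
proof -
  define q where "q = real (card F)^4"
  have q0: "q \<ge> 0" by (simp add: q_def)
  have "\<bar>S4 F f2 f2 f4 f4\<bar> \<le> q" unfolding q_def by (rule S4_abs[OF assms(1)]) (use assms(2) in auto)
  then have b24: "S4 F f2 f2 f4 f4 \<le> q" by simp
  have "\<bar>S4 F f3 f3 f3 f3\<bar> \<le> q" unfolding q_def by (rule S4_abs[OF assms(1)]) (use assms(2) in auto)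
  then have b33: "S4 F f3 f3 f3 f3 \<le> q" by simp
  have n13: "S4 F f1 f1 f3 f3 \<ge> 0" "S4 F f2 f2 f4 f4 \<ge> 0" "S4 F f1 f1 f1 f1 \<ge> 0" "S4 F f3 f3 f3 f3 \<ge> 0"
    using S4_nonneg[of F f1 f3] S4_nonneg[of F f2 f4] S4_nonneg[of F f1 f1] S4_nonneg[of F f3 f3] by auto
  have "(S4 F f1 f2 f3 f4)^4 = ((S4 F f1 f2 f3 f4)\<^sup>2)\<^sup>2" by simp
  also have "\<dots> \<le> (S4 F f1 f1 f3 f3 * S4 F f2 f2 f4 f4)\<^sup>2"
    by (rule power_mono[OF S4_sq1]) simp
  also have "\<dots> = (S4 F f1 f1 f3 f3)\<^sup>2 * (S4 F f2 f2 f4 f4)\<^sup>2" by (simp add: power_mult_distrib)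
  also have "\<dots> \<le> (S4 F f1 f1 f1 f1 * S4 F f3 f3 f3 f3) * q\<^sup>2"
    by (rule mult_mono[OF S4_sq2 power_mono[OF b24]]) (use n13 in auto)
  also have "\<dots> \<le> (S4 F f1 f1 f1 f1 * q) * q\<^sup>2"
    by (rule mult_right_mono[OF mult_left_mono[OF b33]]) (use n13 in auto)
  also have "\<dots> = S4 F f1 f1 f1 f1 * real (card F)^12" by (simp add: q_def power2_eq_square flip: power_add)
  finally show ?thesis .
qed




lemma root_bound:
  fixes x y q :: real
  assumes q: "q > 0" and h: "x^4 \<le> y * q^12"
  shows "\<bar>x / q^4\<bar> \<le> (y / q^4) powr (1/4)"
proof -
  define m where "m = \<bar>x / q^4\<bar>"
  have m0: "m \<ge> 0" by (simp add: m_def)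
  have "m^4 = x^4 / q^16"
    by (simp add: m_def power_divide power_abs flip: power_mult)
  also have "\<dots> \<le> y * q^12 / q^16"
    using h q by (simp add: divide_right_mono)
  also have "\<dots> = y / q^4"
    using q by (simp add: field_simps flip: power_add)
  finally have m4: "m^4 \<le> y / q^4" .
  have "m = (m^4) powr (1/4)"
  proof (cases "m = 0")
    case True then show ?thesis by simp
  next
    case False
    then have "m > 0" using m0 by simp
    have e: "m powr 4 = m^4" using \<open>m > 0\<close> by simp
    have "(m^4) powr (1/4) = (m powr 4) powr (1/4)" by (simp only: e)
    also have "\<dots> = m powr (4 * (1/4))" by (rule powr_powr)
    also have "\<dots> = m" using \<open>m > 0\<close> by simp
    finally show ?thesis by simp
  qed
  also have "\<dots> \<le> (y / q^4) powr (1/4)"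
    by (rule powr_mono2) (use m4 in auto)
  finally show ?thesis by (simp add: m_def)
qed

lemma final_ineq:
  fixes q n :: real
  assumes q: "q \<ge> 1" and n: "n > 0" and h: "n \<ge> q powr (2/3)"
  shows "sqrt q / n \<le> q powr (1/8) / n powr (1/4)"
proof -
  have "q powr (1/2) \<le> q powr (2/3)" by (rule powr_mono) (use q in auto)
  with h have s: "q powr (1/2) \<le> n" by simp
  have "q powr (3/8) = (q powr (1/2)) powr (3/4)" by (simp add: powr_powr)
  also have "\<dots> \<le> n powr (3/4)" by (rule powr_mono2) (use s in auto)
  finally have t: "q powr (3/8) \<le> n powr (3/4)" .
  have "sqrt q * n powr (1/4) = q powr (1/8) * (q powr (3/8) * n powr (1/4))"
    using q by (simp add: powr_half_sqrt[symmetric] mult.assoc[symmetric] powr_add[symmetric])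
  also have "\<dots> \<le> q powr (1/8) * (n powr (3/4) * n powr (1/4))"
    using t by (intro mult_left_mono mult_right_mono) auto
  also have "\<dots> = q powr (1/8) * n"
    using n by (simp add: powr_add[symmetric])
  finally have "sqrt q * n powr (1/4) \<le> q powr (1/8) * n" .
  then show ?thesis using n by (simp add: field_simps)
qed

lemma sum2_bound:
  fixes G :: "nat \<Rightarrow> nat \<Rightarrow> real"
  assumes "\<And>c d. c \<in> F \<Longrightarrow> d \<in> F \<Longrightarrow> \<bar>G c d\<bar> \<le> B"
  shows "\<bar>\<Sum>c\<in>F. \<Sum>d\<in>F. G c d\<bar> \<le> real (card F)^2 * B"
proof -
  have "\<bar>\<Sum>c\<in>F. \<Sum>d\<in>F. G c d\<bar> \<le> (\<Sum>c\<in>F. \<Sum>d\<in>F. B)"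
    apply (rule order_trans[OF sum_abs], rule sum_mono)
    apply (rule order_trans[OF sum_abs], rule sum_mono)
    using assms by auto
  then show ?thesis by (simp add: power2_eq_square)
qed




lemma main_bound:
  fixes R :: "nat ring" and f1 f2 f3 f4 :: "nat \<times> nat \<Rightarrow> real"
  assumes fR: "field R" and fin: "finite (carrier R)" and sg: "subgroup A (mult_of R)"
    and bnd: "\<forall>f\<in>{f1,f2,f3,f4}. \<forall>x\<in>carrier R. \<forall>y\<in>carrier R. \<bar>f (x,y)\<bar> \<le> 1"
  shows "\<bar>Nform R A f1 f2 f3 f4\<bar> \<le> \<bar>Mform R f1 f2 f3 f4\<bar>
     + 2 * (sqrt (real (card (carrier R))) / real (card A))"
proof -
  interpret field R by (rule fR)
  note sf = subgroup_facts[OF sg fin]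
  define F where "F = carrier R"
  define q where "q = real (card F)"
  define eta where "eta = sqrt q / real (card A)"
  define s where "s = sigma R A"
  have qpos: "q > 0" using fin unfolding q_def F_def
    by (metis card_0_eq empty_iff of_nat_0_less_iff gr0I zero_closed)
  have b: "\<And>g x y. g \<in> {f1,f2,f3,f4} \<Longrightarrow> x \<in> F \<Longrightarrow> y \<in> F \<Longrightarrow> \<bar>g (x,y)\<bar> \<le> 1"
    using bnd F_def by blast
  have b2: "\<bar>g (x,y) * h (x',y')\<bar> \<le> 1" if "g \<in> {f1,f2,f3,f4}" "h \<in> {f1,f2,f3,f4}" "x \<in> F" "y \<in> F" "x' \<in> F" "y' \<in> F"
    for g h x y x' y'
    using b[OF that(1,3,4)] b[OF that(2,5,6)] by (simp add: abs_mult mult_le_one)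
  have eta0: "eta \<ge> 0" by (simp add: eta_def q_def)
  define Y where "Y a b c d = (s (a \<ominus>\<^bsub>R\<^esub> b) - 1) * ((f1 (a,c) * f2 (a,d)) * (f3 (b,c) * f4 (b,d)))" for a b c d
  define Z where "Z a b c d = (s (c \<ominus>\<^bsub>R\<^esub> d) - 1) * ((f1 (a,c) * f3 (b,c)) * (f2 (a,d) * f4 (b,d)))" for a b c d
  have pt: "f1 (a,c) * f2 (a,d) * f3 (b,c) * f4 (b,d) * s (a \<ominus>\<^bsub>R\<^esub> b) * s (c \<ominus>\<^bsub>R\<^esub> d)
     = f1 (a,c) * f2 (a,d) * f3 (b,c) * f4 (b,d) + Y a b c d + s (a \<ominus>\<^bsub>R\<^esub> b) * Z a b c d" for a b c d
    unfolding Y_def Z_def by (simp add: algebra_simps)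
  have NS: "q^4 * Nform R A f1 f2 f3 f4 = S4 F f1 f2 f3 f4
      + (\<Sum>a\<in>F. \<Sum>b\<in>F. \<Sum>c\<in>F. \<Sum>d\<in>F. Y a b c d)
      + (\<Sum>a\<in>F. \<Sum>b\<in>F. \<Sum>c\<in>F. \<Sum>d\<in>F. s (a \<ominus>\<^bsub>R\<^esub> b) * Z a b c d)"
    unfolding Nform_def S4_def pt[unfolded s_def] using qpos
    by (simp add: sum.distrib q_def F_def s_def)
  have MS: "Mform R f1 f2 f3 f4 = S4 F f1 f2 f3 f4 / q^4"
    unfolding Mform_def S4_def q_def F_def by simp
  have X3: "\<bar>\<Sum>a\<in>F. \<Sum>b\<in>F. \<Sum>c\<in>F. \<Sum>d\<in>F. Y a b c d\<bar> \<le> q^4 * eta"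
  proof -
    have "(\<Sum>a\<in>F. \<Sum>b\<in>F. \<Sum>c\<in>F. \<Sum>d\<in>F. Y a b c d) = (\<Sum>c\<in>F. \<Sum>d\<in>F. \<Sum>a\<in>F. \<Sum>b\<in>F. Y a b c d)"
      by (rule swap4)
    also have "\<bar>\<dots>\<bar> \<le> q^2 * (q^2 * eta)"
      unfolding q_def
    proof (rule sum2_bound)
      fix c d assume cd: "c \<in> F" "d \<in> F"
      show "\<bar>\<Sum>a\<in>F. \<Sum>b\<in>F. Y a b c d\<bar> \<le> real (card F)^2 * eta"
        unfolding Y_def s_def eta_def q_def F_def
        by (rule bilin[OF fR fin sg]) (use b2 cd F_def in auto)
    qed
    finally show ?thesis by (simp add: power_add[symmetric] mult.assoc[symmetric])
  qed
  have X2: "\<bar>\<Sum>a\<in>F. \<Sum>b\<in>F. \<Sum>c\<in>F. \<Sum>d\<in>F. s (a \<ominus>\<^bsub>R\<^esub> b) * Z a b c d\<bar> \<le> q^4 * eta"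
  proof -
    have I: "\<bar>\<Sum>c\<in>F. \<Sum>d\<in>F. Z a b c d\<bar> \<le> q^2 * eta" if ab: "a \<in> F" "b \<in> F" for a b
      unfolding Z_def s_def eta_def q_def F_def
      by (rule bilin[OF fR fin sg]) (use b2 ab F_def in auto)
    have "(\<Sum>a\<in>F. \<Sum>b\<in>F. \<Sum>c\<in>F. \<Sum>d\<in>F. s (a \<ominus>\<^bsub>R\<^esub> b) * Z a b c d)
        = (\<Sum>a\<in>F. \<Sum>b\<in>F. s (a \<ominus>\<^bsub>R\<^esub> b) * (\<Sum>c\<in>F. \<Sum>d\<in>F. Z a b c d))"
      by (simp add: sum_distrib_left)
    also have "\<bar>\<dots>\<bar> \<le> (\<Sum>a\<in>F. \<Sum>b\<in>F. s (a \<ominus>\<^bsub>R\<^esub> b) * (q^2 * eta))"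
      apply (rule order_trans[OF sum_abs], rule sum_mono)
      apply (rule order_trans[OF sum_abs], rule sum_mono)
      using I by (simp add: abs_mult s_def sigma_nonneg mult_left_mono)
    also have "\<dots> = (\<Sum>a\<in>F. q * (q^2 * eta))"
    proof (rule sum.cong[OF refl])
      fix a assume a: "a \<in> F"
      have "(\<Sum>b\<in>F. s (a \<ominus>\<^bsub>R\<^esub> b) * (q^2 * eta)) = (\<Sum>b\<in>F. s (a \<ominus>\<^bsub>R\<^esub> b)) * (q^2 * eta)"
        by (simp add: sum_distrib_right)
      also have "(\<Sum>b\<in>F. s (a \<ominus>\<^bsub>R\<^esub> b)) = q"
        using sigma_sum[OF fR fin sg, of a] a unfolding s_def q_def F_def by simp
      finally show "(\<Sum>b\<in>F. s (a \<ominus>\<^bsub>R\<^esub> b) * (q^2 * eta)) = q * (q^2 * eta)" .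
    qed
    also have "\<dots> = q^4 * eta" by (simp add: q_def power_add[symmetric] power2_eq_square power4_eq_xxxx)
    finally show ?thesis .
  qed
  have "Nform R A f1 f2 f3 f4 = Mform R f1 f2 f3 f4
      + ((\<Sum>a\<in>F. \<Sum>b\<in>F. \<Sum>c\<in>F. \<Sum>d\<in>F. Y a b c d)
      + (\<Sum>a\<in>F. \<Sum>b\<in>F. \<Sum>c\<in>F. \<Sum>d\<in>F. s (a \<ominus>\<^bsub>R\<^esub> b) * Z a b c d)) / q^4"
    using NS MS qpos by (simp add: field_simps)
  also have "\<bar>\<dots>\<bar> \<le> \<bar>Mform R f1 f2 f3 f4\<bar> + (q^4 * eta + q^4 * eta) / q^4"
  proof -
    have gen: "\<bar>(P + Q) / q^4\<bar> \<le> (q^4 * eta + q^4 * eta) / q^4"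
      if "\<bar>P\<bar> \<le> q^4 * eta" "\<bar>Q\<bar> \<le> q^4 * eta" for P Q :: real
    proof -
      have "\<bar>P + Q\<bar> \<le> q^4 * eta + q^4 * eta" using that by linarith
      then have "\<bar>P + Q\<bar> / q^4 \<le> (q^4 * eta + q^4 * eta) / q^4"
        using qpos by (intro divide_right_mono) auto
      then show ?thesis using qpos by (simp only: abs_divide abs_of_pos zero_less_power)
    qed
    show ?thesis
      by (rule order_trans[OF abs_triangle_ineq add_left_mono[OF gen[OF X3 X2]]])
  qed
  also have "\<dots> = \<bar>Mform R f1 f2 f3 f4\<bar> + 2 * eta" using qpos by simp
  finally show ?thesis unfolding eta_def q_def F_def .
qed




lemma M_le_box:
  fixes R :: "nat ring" and f1 f2 f3 f4 :: "nat \<times> nat \<Rightarrow> real"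
  assumes fin: "finite (carrier R)" and qpos: "card (carrier R) > 0"
    and bnd: "\<forall>f\<in>{f1,f2,f3,f4}. \<forall>x\<in>carrier R. \<forall>y\<in>carrier R. \<bar>f (x,y)\<bar> \<le> 1"
  shows "\<bar>Mform R f1 f2 f3 f4\<bar> \<le> Min {box_norm R f1, box_norm R f2, box_norm R f3, box_norm R f4}"
proof -
  define F where "F = carrier R"
  define q where "q = real (card F)"
  have q0: "q > 0" using qpos by (simp add: q_def F_def)
  have MS: "Mform R g1 g2 g3 g4 = S4 F g1 g2 g3 g4 / q^4" for g1 g2 g3 g4
    unfolding Mform_def S4_def q_def F_def by simp
  have bx: "box_norm R g = (S4 F g g g g / q^4) powr (1/4)" for g
    unfolding box_norm_def MS ..
  have finF: "finite F" using fin F_def by simp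
  have B: "\<And>g x y. g \<in> {f1,f2,f3,f4} \<Longrightarrow> x \<in> F \<Longrightarrow> y \<in> F \<Longrightarrow> \<bar>g (x,y)\<bar> \<le> 1"
    using bnd F_def by blast
  have e2: "S4 F f1 f2 f3 f4 = S4 F f2 f1 f4 f3" by (rule S4_symd)
  have e3: "S4 F f1 f2 f3 f4 = S4 F f3 f4 f1 f2" by (rule S4_symb)
  have e4: "S4 F f1 f2 f3 f4 = S4 F f4 f3 f2 f1" using S4_symb S4_symd by metis
  have m1: "(S4 F f1 f2 f3 f4)^4 \<le> S4 F f1 f1 f1 f1 * q^12"
    unfolding q_def by (rule S4_main[OF finF]) (use B in auto)
  have m2: "(S4 F f1 f2 f3 f4)^4 \<le> S4 F f2 f2 f2 f2 * q^12"
    unfolding q_def e2 by (rule S4_main[OF finF]) (use B in auto)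
  have m3: "(S4 F f1 f2 f3 f4)^4 \<le> S4 F f3 f3 f3 f3 * q^12"
    unfolding q_def e3 by (rule S4_main[OF finF]) (use B in auto)
  have m4: "(S4 F f1 f2 f3 f4)^4 \<le> S4 F f4 f4 f4 f4 * q^12"
    unfolding q_def e4 by (rule S4_main[OF finF]) (use B in auto)
  show ?thesis
    unfolding MS bx
    using root_bound[OF q0 m1] root_bound[OF q0 m2] root_bound[OF q0 m3] root_bound[OF q0 m4]
    by simp
qed

theorem lemma3p4:
  shows "\<exists>C::real. C > 0 \<and>
    (\<forall>(R :: nat ring) (A :: nat set) f1 f2 f3 f4.
       field R \<longrightarrow> finite (carrier R) \<longrightarrow> card (carrier R) mod 4 = 3 \<longrightarrow>
       subgroup A (mult_of R) \<longrightarrow>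
       real (card A) \<ge> real (card (carrier R)) powr (2/3) \<longrightarrow>
       (\<forall>f\<in>{f1,f2,f3,f4}. \<forall>x\<in>carrier R. \<forall>y\<in>carrier R. \<bar>f (x,y)\<bar> \<le> 1) \<longrightarrow>
       \<bar>Nform R A f1 f2 f3 f4\<bar> \<le>
         Min {box_norm R f1, box_norm R f2, box_norm R f3, box_norm R f4}
         + C * real (card (carrier R)) powr (1/8) / real (card A) powr (1/4))"
proof (intro exI[of _ 2] conjI allI impI)
  show "(2::real) > 0" by simp
  fix R :: "nat ring" and A :: "nat set" and f1 f2 f3 f4 :: "nat \<times> nat \<Rightarrow> real"
  assume fR: "field R" and fin: "finite (carrier R)" and "card (carrier R) mod 4 = 3"
    and sg: "subgroup A (mult_of R)"
    and big: "real (card A) \<ge> real (card (carrier R)) powr (2/3)"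
    and bnd: "\<forall>f\<in>{f1,f2,f3,f4}. \<forall>x\<in>carrier R. \<forall>y\<in>carrier R. \<bar>f (x,y)\<bar> \<le> 1"
  interpret field R by (rule fR)
  note sf = subgroup_facts[OF sg fin]
  have qpos: "card (carrier R) > 0" using fin
    by (metis card_0_eq empty_iff gr0I zero_closed)
  have q1: "real (card (carrier R)) \<ge> 1" using qpos by simp
  have npos: "real (card A) > 0" using sf by simp
  have "\<bar>Nform R A f1 f2 f3 f4\<bar> \<le> \<bar>Mform R f1 f2 f3 f4\<bar>
     + 2 * (sqrt (real (card (carrier R))) / real (card A))"
    by (rule main_bound[OF fR fin sg bnd])
  also have "\<dots> \<le> Min {box_norm R f1, box_norm R f2, box_norm R f3, box_norm R f4}
     + 2 * (real (card (carrier R)) powr (1/8) / real (card A) powr (1/4))"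
    by (intro add_mono M_le_box[OF fin qpos bnd] mult_left_mono final_ineq[OF q1 npos big]) simp
  finally show "\<bar>Nform R A f1 f2 f3 f4\<bar> \<le>
         Min {box_norm R f1, box_norm R f2, box_norm R f3, box_norm R f4}
         + 2 * real (card (carrier R)) powr (1/8) / real (card A) powr (1/4)"
    by simp
qed


end
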